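(* Suppose that $n_1,n_2$ are integers with $n_2\ge n_1\ge 34$. Then $$\frac{n_1}{n_1+n_2}\log\log(n_2)\le\frac12\log\log(n_1).$$
   Context: $\log$ denotes the natural logarithm. *)

theory Defs
  imports Complex_Main
begin

end

theory Submission
  imports Defs
begin

theorem lemma1:
  fixes n1 n2 :: int
  assumes "34 \<le> n1" and "n1 \<le> n2"
  shows "real_of_int n1 / real_of_int (n1 + n2) * ln (ln (real_of_int n2))
           \<le> 1 / 2 * ln (ln (real_of_int n1))"
proof -
  define x where "x = real_of_int n1"
  define y where "y = real_of_int n2"
  have x34: "34 \<le> x" using assms x_def by simp
  have xy: "x \<le> y" using assms x_def y_def by simp
  have e3: "exp 3 \<le> (27::real)"
  proof -
    have "exp (3::real) = exp 1 ^ 3" by (simp add: exp_of_nat_mult[symmetric])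
    also have "\<dots> \<le> 3 ^ 3" by (rule power_mono[OF exp_le]) simp
    finally show ?thesis by simp
  qed
  have "exp (exp 1) \<le> exp (3::real)" using exp_le by simp
  hence "exp (exp 1) \<le> x" using e3 x34 by linarith
  hence L1e: "exp 1 \<le> ln x" using x34 by (simp add: ln_ge_iff)
  have "2 \<le> exp (1::real)" using exp_ge_add_one_self[of 1] by simp
  hence L1: "2 \<le> ln x" using L1e by linarith
  have lnL1: "1 \<le> ln (ln x)" using L1e L1 by (simp add: ln_ge_iff)
  have "ln (y/x) \<le> y/x - 1" using x34 xy by (intro ln_le_minus_one) simp
  hence d1: "ln y - ln x \<le> (y - x)/x" using x34 xy by (simp add: ln_div diff_divide_distrib)
  have Ly: "ln x \<le> ln y" using x34 xy by simp
  have "ln (ln y / ln x) \<le> ln y / ln x - 1" using L1 Ly by (intro ln_le_minus_one) simp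
  hence d2: "ln (ln y) - ln (ln x) \<le> (ln y - ln x)/ln x" using L1 Ly
    by (simp add: ln_div diff_divide_distrib)
  have "(ln y - ln x)/ln x \<le> ((y - x)/x)/ln x" using d1 L1 divide_right_mono[OF d1, of "ln x"] by simp
  hence d3: "x * (ln (ln y) - ln (ln x)) \<le> (y - x) / ln x" using d2 x34
    by (smt (verit) divide_divide_eq_left mult.commute pos_le_divide_eq)
  have "(y - x)/ln x * 2 \<le> (y - x)" proof -
    have "(y - x) * 2 \<le> (y - x) * ln x" using L1 xy by (intro mult_left_mono) auto
    thus ?thesis using L1 by (simp add: field_simps)
  qed
  also have "\<dots> \<le> (y - x) * ln (ln x)" using lnL1 xy by (simp add: mult_le_cancel_left1)
  finally have c: "(y - x) / ln x * 2 \<le> (y - x) * ln (ln x)" .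
  have e1: "x * (ln (ln y) - ln (ln x)) = x * ln (ln y) - x * ln (ln x)" by (simp add: algebra_simps)
  have e2: "(y - x) * ln (ln x) = y * ln (ln x) - x * ln (ln x)" by (simp add: algebra_simps)
  have e3: "2 * x * ln (ln y) = 2 * (x * ln (ln y))" "(x + y) * ln (ln x) = x * ln (ln x) + y * ln (ln x)"
    by (simp_all add: algebra_simps)
  have key0: "2 * (x * ln (ln y)) \<le> x * ln (ln x) + y * ln (ln x)" using d3 c e1 e2 by argo
  have key: "2 * x * ln (ln y) \<le> (x + y) * ln (ln x)" using key0 e3 by simp
  have "x / (x + y) * ln (ln y) \<le> 1/2 * ln (ln x)"
    using key x34 xy by (simp add: field_simps)
  thus ?thesis by (simp add: x_def y_def)
qed

end
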